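(* Fix integers $\ell<\mu<u$ and a scale $s>0$. Let $Z$ be the random variable on $\{\ell,\ell+1,\dots,u\}$ with $$\Pr[Z=k]=\begin{cases}F(\ell\mid\mu,s)&k=\ell,\\ p(k\mid\mu,s)&\ell<k<u,\\ 1-F(u-1\mid\mu,s)&k=u,\\ 0&\text{otherwise},\end{cases}$$ where $p(k\mid\mu,s)=\frac{e^{1/s}-1}{e^{1/s}+1}e^{-|k-\mu|/s}$ and $F(x\mid\mu,s)=\frac{e^{1/s}}{e^{1/s}+1}e^{-(\mu-x)/s}$ if $x\le\mu$, and $F(x\mid\mu,s)=1-\frac{1}{e^{1/s}+1}e^{-(x-\mu)/s}$ if $x>\mu$. If the support $\{\ell,\dots,u\}$ contains at least four points, then there exists $k\in\{\ell,\dots,u\}$ such that $\Pr[Z=k]\notin\{t/2^N: t,N\in\mathbb{N}\}$, i.e. at least one output mass is not a dyadic rational.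
   Context: $Z$ is the Discrete Laplace distribution with shift $\mu$ and scale $s$ censored (clamped) to $[\ell,u]$. *)

theory Defs
  imports Complex_Main
begin

definition dlap_pmf :: "real \<Rightarrow> real \<Rightarrow> int \<Rightarrow> real" where
  "dlap_pmf \<mu> s k = (exp (1/s) - 1) / (exp (1/s) + 1) * exp (- \<bar>real_of_int k - \<mu>\<bar> / s)"

definition dlap_cdf :: "real \<Rightarrow> real \<Rightarrow> real \<Rightarrow> real" where
  "dlap_cdf \<mu> s x = (if x \<le> \<mu> then exp (1/s) / (exp (1/s) + 1) * exp (- (\<mu> - x) / s)
                       else 1 - 1 / (exp (1/s) + 1) * exp (- (x - \<mu>) / s))"

definition clamped_dlap_mass :: "int \<Rightarrow> int \<Rightarrow> real \<Rightarrow> real \<Rightarrow> int \<Rightarrow> real" where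
  "clamped_dlap_mass l u \<mu> s k =
     (if k = l then dlap_cdf \<mu> s (real_of_int l)
      else if l < k \<and> k < u then dlap_pmf \<mu> s k
      else if k = u then 1 - dlap_cdf \<mu> s (real_of_int (u - 1))
      else 0)"

definition dyadic :: "real set" where
  "dyadic = {real t / 2 ^ N | t N :: nat. True}"

end

theory Submission
  imports Defs
begin

lemma odd_decomp:
  fixes t :: nat
  assumes "t > 0"
  shows "\<exists>w k. odd w \<and> t = 2 ^ k * w"
  using assms
proof (induction t rule: less_induct)
  case (less t)
  show ?case
  proof (cases "odd t")
    case True then show ?thesis by (intro exI[of _ t] exI[of _ 0]) simp
  next
    case False
    then obtain h where h: "t = 2 * h" by (auto elim: evenE)
    with less have "h < t" "h > 0" by auto
    from less.IH[OF this] obtain w k where "odd w" "h = 2 ^ k * w" by blast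
    then show ?thesis using h by (intro exI[of _ w] exI[of _ "Suc k"]) simp
  qed
qed

lemma key_nat:
  fixes t N r M :: nat
  assumes odd: "odd t" and lt: "t < 2 ^ N"
    and eq: "r * (2 ^ N + t) * 2 ^ N = t * (2 ^ N - t) * 2 ^ M"
  shows False
proof -
  define m where "m = 2 ^ N + t"
  have N1: "N \<ge> 1" using lt odd by (cases N) auto
  have oddm: "odd m" using odd N1 unfolding m_def by simp
  have c2: "coprime m (2 ^ k)" for k
    using oddm by (simp add: coprime_commute coprime_power_left_iff)
  have c1: "coprime m t"
  proof -
    have "coprime (2 ^ N) t" using odd by (simp add: coprime_power_left_iff)
    show ?thesis
    proof (rule coprimeI)
      fix d assume d1: "d dvd m" and d2: "d dvd t"
      have "d dvd m - t" using d1 d2 by (rule dvd_diff_nat)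
      then have "d dvd 2 ^ N" unfolding m_def by simp
      then show "is_unit d" using d2 \<open>coprime (2 ^ N) t\<close>
        by (meson coprime_common_divisor)
    qed
  qed
  have c3: "coprime m (2 ^ N - t)"
  proof (rule coprimeI)
    fix d assume d1: "d dvd m" and d2: "d dvd 2 ^ N - t"
    have "m + (2 ^ N - t) = 2 ^ Suc N" using lt unfolding m_def by simp
    then have "d dvd 2 ^ Suc N" using d1 d2 by (metis dvd_add)
    then show "is_unit d" using d1 c2[of "Suc N"]
      by (meson coprime_common_divisor)
  qed
  have "m dvd t * (2 ^ N - t) * 2 ^ M"
    using eq unfolding m_def by (metis dvd_mult dvd_mult2 dvd_refl)
  moreover have "coprime m (t * (2 ^ N - t) * 2 ^ M)"
    using c1 c2 c3 by simp
  ultimately have "is_unit m" by (meson coprime_common_divisor dvd_refl)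
  then have "m = 1" by simp
  moreover have "m \<ge> 3"
  proof -
    have "(2::nat) ^ N \<ge> 2 ^ 1" using N1 by (intro power_increasing) auto
    moreover have "t \<ge> 1" using odd by (cases t) auto
    ultimately show ?thesis unfolding m_def by simp
  qed
  ultimately show False by simp
qed

theorem mainTheorem12:
  fixes l u \<mu> :: int and s :: real
  assumes "l < \<mu>" and "\<mu> < u" and "s > 0"
    and "card {l..u} \<ge> 4"
  shows "\<exists>k\<in>{l..u}. clamped_dlap_mass l u (real_of_int \<mu>) s k \<notin> dyadic"
proof (rule ccontr)
  assume "\<not> ?thesis"
  then have all: "\<And>k. k \<in> {l..u} \<Longrightarrow> clamped_dlap_mass l u (real_of_int \<mu>) s k \<in> dyadic"
    by blast
  define e where "e = exp (1/s)"
  define c where "c = (e - 1) / (e + 1)"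
  have e1: "e > 1" unfolding e_def using assms(3) by simp
  have em: "exp (- 1 / s) = 1 / e" unfolding e_def by (simp add: exp_minus_inverse exp_minus divide_inverse)
  have c0: "0 < c" "c < 1" using e1 unfolding c_def by auto
  have u4: "u - l \<ge> 3" using assms(4) by simp
  obtain k where k: "l < k" "k < u" "\<bar>k - \<mu>\<bar> = 1"
  proof (cases "\<mu> + 1 < u")
    case True then show ?thesis using that[of "\<mu>+1"] assms by auto
  next
    case False then show ?thesis using that[of "\<mu>-1"] assms u4 by auto
  qed
  have mmu: "clamped_dlap_mass l u (real_of_int \<mu>) s \<mu> = c"
    using assms unfolding clamped_dlap_mass_def dlap_pmf_def c_def e_def by auto
  have mk: "clamped_dlap_mass l u (real_of_int \<mu>) s k = c / e"
  proof -
    have "\<bar>real_of_int k - real_of_int \<mu>\<bar> = 1" using k(3)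
      by (metis of_int_1 of_int_abs of_int_diff)
    then show ?thesis
      using k em unfolding clamped_dlap_mass_def dlap_pmf_def c_def e_def by auto
  qed
  have "c \<in> dyadic" using all[of \<mu>] mmu assms by auto
  then obtain t0 N0 where t0: "c = real t0 / 2 ^ N0" unfolding dyadic_def by auto
  have "t0 > 0" using c0 t0 by (cases "t0 = 0") auto
  then obtain t j where tk: "odd t" "t0 = 2 ^ j * t" using odd_decomp by metis
  have t0lt: "t0 < 2 ^ N0"
  proof -
    have "real t0 < 2 ^ N0" using c0(2) t0 by (simp add: divide_less_eq)
    then show ?thesis by (metis of_nat_less_iff of_nat_numeral of_nat_power)
  qed
  have "t \<ge> 1" using tk(1) by (cases t) auto
  then have "2 ^ j \<le> t0" using tk(2) by simp
  then have "(2::nat) ^ j < 2 ^ N0" using t0lt by linarith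
  then have kN: "j < N0" by (simp add: power_strict_increasing_iff)
  define N where "N = N0 - j"
  have "(2::real) ^ N0 = 2 ^ j * 2 ^ N" unfolding N_def using kN
    by (simp add: power_add[symmetric])
  then have tN: "odd t" "c = real t / 2 ^ N" using t0 tk by auto
  have "c / e \<in> dyadic" using all[of k] mk k by auto
  then obtain r M where rM: "c / e = real r / 2 ^ M" unfolding dyadic_def by auto
  have rel: "(c / e) * (1 + c) = c * (1 - c)"
  proof -
    have p: "1 + c = 2 * e / (e + 1)" "1 - c = 2 / (e + 1)"
      unfolding c_def using e1 by (auto simp: field_simps)
    have "e \<noteq> 0" using e1 by auto
    then show ?thesis unfolding p by (simp add: c_def)
  qed
  have tlt: "t < 2 ^ N"
  proof -
    have "real t < 2 ^ N" using c0(2) tN(2) by (simp add: divide_less_eq)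
    then show ?thesis by (metis of_nat_less_iff of_nat_numeral of_nat_power)
  qed
  have "real r / 2 ^ M * (1 + real t / 2 ^ N) = real t / 2 ^ N * (1 - real t / 2 ^ N)"
    using rel unfolding rM[symmetric] tN(2)[symmetric] by simp
  then have "(real r * (2 ^ N + real t) * 2 ^ N) * 2 ^ N = (real t * (2 ^ N - real t) * 2 ^ M) * 2 ^ N"
    by (simp add: field_simps)
  then have "real r * (2 ^ N + real t) * 2 ^ N = real t * (2 ^ N - real t) * 2 ^ M"
    by simp
  then have "real (r * (2 ^ N + t) * 2 ^ N) = real (t * (2 ^ N - t) * 2 ^ M)"
    using tlt by (simp add: of_nat_diff)
  then have "r * (2 ^ N + t) * 2 ^ N = t * (2 ^ N - t) * 2 ^ M"
    using of_nat_eq_iff by blast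
  then show False using key_nat tN(1) tlt by blast
qed

end
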